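(* Let $N\ge1$ and let $x=(x_1,\dots,x_{2N})\in(\mathbb{R}_{>0})^{2N}$ satisfy the highest weight condition. Then Algorithm I and Algorithm II, both started from $x^{(1)}=x$, stop after the same number $u$ of steps and produce the same sequence of pairs $(\mu^{(i)},\nu^{(i)})_{1\le i\le u}$.
   Context: Highest weight condition: a sequence $x_1,\dots,x_{2n}$ of nonnegative reals satisfies it if $\sum_{i=1}^k(x_{2i-1}-x_{2i})\ge0$ for all $1\le k\le n$. Algorithm I. Set $N^{(1)}=N$, $x^{(1)}=x$. Given $x^{(i)}=(x^{(i)}_1,\dots,x^{(i)}_{2N^{(i)}})$ of positive reals satisfying the highest weight condition: let $\mu^{(i)}=\min_j x^{(i)}_j$ and $y^{(i)}_j=x^{(i)}_j-\mu^{(i)}$. In the (linear, non-cyclic) array $y^{(i)}_1,\dots,y^{(i)}_{2N^{(i)}}$ consider the maximal runs of consecutive zeros (a lone zero counts as a run); say there are $k^{(i)}$ runs with lengths $n^{(i)}_1,\dots,n^{(i)}_{k^{(i)}}$. Let $N^{(i+1)}=N^{(i)}-\sum_{j}\lceil n^{(i)}_j/2\rceil$ and $\nu^{(i)}=N^{(i)}-N^{(i+1)}$. If $N^{(i+1)}=0$, stop and set $u=i$. Otherwise form $x^{(i+1)}$ from $y^{(i)}$: (a) if a run of zeros is at the left end, delete it; (b) for every run of zeros lying between positive entries $a,b$, delete the zeros if the run length is even, and if odd delete the zeros and also replace $a,b$ by the single entry $a+b$; (c) if a run of zeros is at the right end, preceded by a positive entry $a$, delete the zeros, and if its length is odd also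 delete $a$ and add $a$ to the first entry of the resulting array. Repeat with $x^{(i+1)}$. Algorithm II is identical to Algorithm I except that step (c) is replaced by: (c') if a run of zeros is at the right end, preceded by a positive entry $a$, delete the zeros, and if its length is odd also delete $a$ (without adding it anywhere). *)

theory Defs
  imports Complex_Main
begin

text \<open>Highest weight condition for a list x_1..x_{2n} (0-indexed here):
  for all 1 <= k <= n, sum_{i<k} (x_{2i+1} - x_{2i+2}) >= 0, and all entries nonnegative.\<close>
definition highest_weight :: "real list \<Rightarrow> bool" where
  "highest_weight xs \<longleftrightarrow> (\<forall>a\<in>set xs. a \<ge> 0) \<and>
     (\<forall>k\<in>{1..length xs div 2}. (\<Sum>i<k. xs ! (2*i) - xs ! (2*i+1)) \<ge> 0)"

text \<open>Lengths of the maximal runs of consecutive zeros (linear, left to right);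
  the first argument is the length of the currently open run.\<close>
fun zr :: "nat \<Rightarrow> real list \<Rightarrow> nat list" where
  "zr c [] = (if c > 0 then [c] else [])"
| "zr c (a # xs) = (if a = 0 then zr (Suc c) xs
                    else if c > 0 then c # zr 0 xs else zr 0 xs)"

definition zero_runs :: "real list \<Rightarrow> nat list" where
  "zero_runs ys = zr 0 ys"

definition alg_mu :: "real list \<Rightarrow> real" where
  "alg_mu xs = Min (set xs)"

definition alg_y :: "real list \<Rightarrow> real list" where
  "alg_y xs = map (\<lambda>a. a - alg_mu xs) xs"

definition alg_newN :: "nat \<Rightarrow> real list \<Rightarrow> nat" where
  "alg_newN N xs = N - sum_list (map (\<lambda>n. (n + 1) div 2) (zero_runs (alg_y xs)))"

definition alg_nu :: "nat \<Rightarrow> real list \<Rightarrow> nat" where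
  "alg_nu N xs = N - alg_newN N xs"

text \<open>State: (output reversed,
  length of the currently open zero run, whether a positive entry has been seen).
  Leading zeros are deleted (a); an interior run of zeros is deleted, and if its length
  is odd the entries on both sides are replaced by their sum (b).\<close>
definition scan_step :: "real list \<times> nat \<times> bool \<Rightarrow> real \<Rightarrow> real list \<times> nat \<times> bool" where
  "scan_step s e = (case s of (out, z, st) \<Rightarrow>
     if e = 0 then (if st then (out, Suc z, True) else ([], 0, False))
     else if \<not> st then ([e], 0, True)
     else if odd z then ((hd out + e) # tl out, 0, True)
     else (e # out, 0, True))"

text \<open>Step (c) / (c'): a trailing zero run is deleted; if its length is odd, the entry a
  preceding it is deleted too, and (Algorithm I, addback = True) a is added to the
  first entry of the resulting array; (Algorithm II, addback = False) a is discarded.\<close>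
definition alg_next :: "bool \<Rightarrow> real list \<Rightarrow> real list" where
  "alg_next addback xs = (case foldl scan_step ([], 0, False) (alg_y xs) of (out, z, st) \<Rightarrow>
     if odd z then
       (let a = hd out; rest = rev (tl out) in
        if addback \<and> rest \<noteq> [] then (hd rest + a) # tl rest else rest)
     else rev out)"

definition alg_step :: "bool \<Rightarrow> nat \<times> real list \<Rightarrow> nat \<times> real list" where
  "alg_step addback s = (case s of (N, xs) \<Rightarrow> (alg_newN N xs, alg_next addback xs))"

text \<open>alg_state addback x k = (N^{(k+1)}, x^{(k+1)}), started from (N, x) with 2N = length x.
  addback = True is Algorithm I, addback = False is Algorithm II.\<close>
definition alg_state :: "bool \<Rightarrow> real list \<Rightarrow> nat \<Rightarrow> nat \<times> real list" where
  "alg_state addback x k = (alg_step addback ^^ k) (length x div 2, x)"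

definition alg_mu_seq :: "bool \<Rightarrow> real list \<Rightarrow> nat \<Rightarrow> real" where
  "alg_mu_seq addback x i = alg_mu (snd (alg_state addback x (i - 1)))"

definition alg_nu_seq :: "bool \<Rightarrow> real list \<Rightarrow> nat \<Rightarrow> nat" where
  "alg_nu_seq addback x i = (case alg_state addback x (i - 1) of (N, xs) \<Rightarrow> alg_nu N xs)"

definition alg_stops_at :: "bool \<Rightarrow> real list \<Rightarrow> nat \<Rightarrow> bool" where
  "alg_stops_at addback x u \<longleftrightarrow> u \<ge> 1 \<and>
     (\<forall>i\<in>{1..<u}. fst (alg_state addback x i) \<noteq> 0) \<and> fst (alg_state addback x u) = 0"

end

theory Submission
  imports Defs
begin

fun altsum :: "real list \<Rightarrow> real" where
  "altsum [] = 0"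
| "altsum (a # l) = a - altsum l"

lemma altsum_append: "altsum (l @ r) = altsum l + (if even (length l) then altsum r else - altsum r)"
  by (induction l) auto

lemma altsum_rep0: "altsum (replicate n 0) = 0"
  by (induction n) auto

definition SS :: "nat list \<Rightarrow> nat" where
  "SS l = sum_list (map (\<lambda>n. (n + 1) div 2) l)"

lemma newN_SS: "alg_newN N xs = N - SS (zero_runs (alg_y xs))"
  unfolding alg_newN_def SS_def by simp

definition addhd :: "real \<Rightarrow> real list \<Rightarrow> real list" where
  "addhd d l = (case l of [] \<Rightarrow> [] | h # t \<Rightarrow> (h + d) # t)"

definition addl :: "real \<Rightarrow> real list \<Rightarrow> real list" where
  "addl d l = (if l = [] then [] else butlast l @ [last l + d])"

lemma addl_Nil[simp]: "addl d [] = []" by (simp add: addl_def)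
lemma addl_Cons: "addl d (x # l) = (if l = [] then [x + d] else x # addl d l)"
  by (simp add: addl_def)
lemma addl_0[simp]: "addl 0 l = l"
  by (cases l rule: rev_cases) (auto simp: addl_def)
lemma addhd_0[simp]: "addhd 0 l = l"
  by (cases l) (auto simp: addhd_def)
lemma addhd_Nil[simp]: "addhd d [] = []" by (simp add: addhd_def)
lemma addhd_Cons[simp]: "addhd d (h # t) = (h + d) # t" by (simp add: addhd_def)

lemma rev_addl: "rev (addl d l) = addhd d (rev l)"
  by (cases l rule: rev_cases) (auto simp: addl_def)

definition finB :: "real list \<times> nat \<times> bool \<Rightarrow> real list" where
  "finB s = (case s of (out, z, st) \<Rightarrow> if odd z then rev (tl out) else rev out)"

definition finA :: "real list \<times> nat \<times> bool \<Rightarrow> real list" where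
  "finA s = (case s of (out, z, st) \<Rightarrow> if odd z then
       (let a = hd out; rest = rev (tl out) in if rest \<noteq> [] then (hd rest + a) # tl rest else rest)
     else rev out)"

lemma alg_next_False: "alg_next False xs = finB (foldl scan_step ([], 0, False) (alg_y xs))"
  unfolding alg_next_def finB_def by (simp split: prod.split)

lemma alg_next_True: "alg_next True xs = finA (foldl scan_step ([], 0, False) (alg_y xs))"
  unfolding alg_next_def finA_def by (simp split: prod.split)

lemma scan_F0: "foldl scan_step ([], 0, False) (replicate k 0) = ([], 0, False)"
  by (induction k) (auto simp: scan_step_def)

lemma scan_T0: "foldl scan_step (o', z, True) (replicate k 0) = (o', z + k, True)"
  by (induction k arbitrary: z) (auto simp: scan_step_def)

lemma zr_rep0: "zr c (replicate k 0 @ r) = zr (c + k) r"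
  by (induction k arbitrary: c) auto

lemma len_scan:
  "out \<noteq> [] \<Longrightarrow> length (finB (foldl scan_step (out, z, True) ys)) + 2 * SS (zr z ys)
     = length out + z + length ys"
proof (induction ys arbitrary: out z)
  case Nil
  then show ?case by (auto simp: finB_def SS_def)
next
  case (Cons e ys)
  show ?case
  proof (cases "e = 0")
    case True
    then show ?thesis using Cons.IH[of out "Suc z"] Cons.prems by (simp add: scan_step_def)
  next
    case False
    show ?thesis
    proof (cases "odd z")
      case True
      have "length ((hd out + e) # tl out) = length out" using Cons.prems by simp
      then show ?thesis using Cons.IH[of "(hd out + e) # tl out" 0] Cons.prems False True
        by (auto simp: scan_step_def SS_def) presburger
    next
      case ev: False
      then show ?thesis using Cons.IH[of "e # out" 0] Cons.prems False
        by (auto simp: scan_step_def SS_def)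
    qed
  qed
qed

definition SR :: "real list \<times> nat \<times> bool \<Rightarrow> real list \<times> nat \<times> bool \<Rightarrow> bool" where
  "SR sa sb \<longleftrightarrow> snd sa = snd sb \<and> (\<exists>d\<ge>0. fst sa = addl d (fst sb)) \<and>
     (\<forall>v\<in>set (fst sb). v \<ge> 0) \<and> (snd (snd sb) \<longrightarrow> fst sb \<noteq> []) \<and>
     (\<not> snd (snd sb) \<longrightarrow> fst sb = [] \<and> fst (snd sb) = 0)"

lemma SR_init: "SR ([], 0, False) ([], 0, False)"
  unfolding SR_def by auto

lemma SR_step:
  assumes "SR sa sb" "e \<ge> 0"
  shows "SR (scan_step sa e) (scan_step sb e)"
proof -
  obtain oa z s where sa: "sa = (oa, z, s)" by (cases sa) auto
  obtain ob where sb: "sb = (ob, z, s)" using assms(1) unfolding SR_def sa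
    by (cases sb) auto
  obtain d where d: "d \<ge> 0" "oa = addl d ob" using assms(1) unfolding SR_def sa sb by auto
  have pos: "\<forall>v\<in>set ob. v \<ge> 0" and ne: "s \<longrightarrow> ob \<noteq> []" and nst: "\<not> s \<longrightarrow> ob = [] \<and> z = 0"
    using assms(1) unfolding SR_def sa sb by auto
  show ?thesis
  proof (cases "e = 0")
    case True
    then show ?thesis using d pos ne nst unfolding sa sb SR_def scan_step_def by auto
  next
    case enz: False
    show ?thesis
    proof (cases s)
      case False
      then show ?thesis using enz assms(2) unfolding sa sb SR_def scan_step_def
        by (auto intro!: exI[of _ 0])
    next
      case True
      then obtain h t where ob: "ob = h # t" using ne by (cases ob) auto
      show ?thesis
      proof (cases "odd z")
        case True
        have "(hd oa + e) # tl oa = addl d ((h + e) # t)"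
          using d by (cases "t = []") (auto simp: ob addl_Cons)
        moreover have "\<forall>v\<in>set ((h + e) # t). v \<ge> 0" using pos assms(2) ob by auto
        ultimately show ?thesis using d True \<open>s\<close> enz unfolding sa sb SR_def scan_step_def ob
          by auto
      next
        case False
        have "e # oa = addl d (e # ob)" using d ob by (simp add: addl_Cons)
        moreover have "\<forall>v\<in>set (e # ob). v \<ge> 0" using pos assms(2) by auto
        ultimately show ?thesis using d False \<open>s\<close> enz unfolding sa sb SR_def scan_step_def
          by auto
      qed
    qed
  qed
qed

lemma SR_fold: "\<forall>e\<in>set ys. e \<ge> 0 \<Longrightarrow> SR sa sb \<Longrightarrow>
   SR (foldl scan_step sa ys) (foldl scan_step sb ys)"
proof (induction ys arbitrary: sa sb)
  case (Cons e ys)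
  then show ?case using SR_step[of sa sb e] by simp
qed simp

lemma SR_fin:
  assumes "SR sa sb"
  shows "\<exists>d\<ge>0. finA sa = addhd d (finB sb)"
proof -
  obtain oa z s where sa: "sa = (oa, z, s)" by (cases sa) auto
  obtain ob where sb: "sb = (ob, z, s)" using assms(1) unfolding SR_def sa
    by (cases sb) auto
  obtain d where d: "d \<ge> 0" "oa = addl d ob" using assms(1) unfolding SR_def sa sb by auto
  have pos: "\<forall>v\<in>set ob. v \<ge> 0"
    using assms(1) unfolding SR_def sa sb by auto
  show ?thesis
  proof (cases "odd z")
    case False
    then show ?thesis using d unfolding sa sb finA_def finB_def by (auto simp: rev_addl)
  next
    case True
    show ?thesis
    proof (cases ob)
      case Nil
      then show ?thesis using d True unfolding sa sb finA_def finB_def by auto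
    next
      case (Cons h t)
      show ?thesis
      proof (cases "t = []")
        case True
        then show ?thesis using d \<open>odd z\<close> Cons unfolding sa sb finA_def finB_def
          by (auto simp: addl_Cons)
      next
        case False
        then obtain r0 rt where rt: "rev t = r0 # rt" by (cases "rev t") auto
        have oa: "oa = h # addl d t" using d Cons False by (simp add: addl_Cons)
        have "rev (addl d t) = (r0 + d) # rt" using rt by (simp add: rev_addl)
        then have "finA sa = (r0 + d + h) # rt"
          using \<open>odd z\<close> unfolding sa finA_def oa by (simp add: Let_def)
        moreover have "finB sb = r0 # rt" using \<open>odd z\<close> rt unfolding sb finB_def Cons by simp
        moreover have "h \<ge> 0" using pos Cons by auto
        ultimately show ?thesis using d by (auto intro!: exI[of _ "d + h"] simp: algebra_simps)
      qed
    qed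
  qed
qed

definition Inv :: "real list \<Rightarrow> real list \<Rightarrow> nat \<Rightarrow> bool" where
  "Inv p out z \<longleftrightarrow> out \<noteq> [] \<and> even (length p + length out + z) \<and>
     altsum (rev out) = altsum p \<and>
     (\<forall>j\<le>length out. \<exists>i\<le>length p. altsum (take j (rev out)) = altsum (take i p))"

lemma Inv_step:
  assumes "Inv p out z"
  shows "\<exists>out' z'. scan_step (out, z, True) e = (out', z', True) \<and> Inv (p @ [e]) out' z'"
proof -
  have ne: "out \<noteq> []" and par: "even (length p + length out + z)"
    and alt: "altsum (rev out) = altsum p"
    and pre: "\<forall>j\<le>length out. \<exists>i\<le>length p. altsum (take j (rev out)) = altsum (take i p)"
    using assms unfolding Inv_def by auto
  have preS: "\<exists>i\<le>length (p @ [e]). altsum (take j (rev out)) = altsum (take i (p @ [e]))"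
    if "j \<le> length out" for j
  proof -
    have "\<exists>i\<le>length p. altsum (take j (rev out)) = altsum (take i p)"
      using pre that by simp
    then obtain i where "i \<le> length p" "altsum (take j (rev out)) = altsum (take i p)"
      by blast
    then show ?thesis by (intro exI[of _ i]) auto
  qed
  show ?thesis
  proof (cases "e = 0")
    case True
    have "altsum (rev out) = altsum (p @ [e])" using alt True by (simp add: altsum_append)
    moreover have "even (length (p @ [e]) + length out + Suc z)" using par by simp
    ultimately have "Inv (p @ [e]) out (Suc z)"
      unfolding Inv_def using ne preS by blast
    then show ?thesis using True by (simp add: scan_step_def)
  next
    case enz: False
    show ?thesis
    proof (cases "odd z")
      case True
      define R0 where "R0 = rev (tl out)"
      have rv: "rev out = R0 @ [hd out]" using ne unfolding R0_def
        by (cases out) auto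
      have lR0: "length R0 = length out - 1" unfolding R0_def by simp
      have rv': "rev ((hd out + e) # tl out) = R0 @ [hd out + e]" unfolding R0_def by simp
      have par2: "even (length p + length R0)" using par True ne lR0
        by (cases out) auto
      have B1: "altsum (rev ((hd out + e) # tl out)) = altsum (rev out) + (if even (length R0) then e else -e)"
        unfolding rv' rv by (simp add: altsum_append)
      have B2: "altsum (p @ [e]) = altsum p + (if even (length p) then e else -e)"
        by (simp add: altsum_append)
      have A1: "altsum (rev ((hd out + e) # tl out)) = altsum (p @ [e])"
        using alt par2 B1 B2 by auto
      have A2: "\<exists>i\<le>length (p @ [e]). altsum (take j (rev ((hd out + e) # tl out))) = altsum (take i (p @ [e]))"
        if j: "j \<le> length ((hd out + e) # tl out)" for j
      proof (cases "j \<le> length R0")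
        case True
        have "take j (rev ((hd out + e) # tl out)) = take j (rev out)"
          unfolding rv' rv using True by simp
        then show ?thesis using preS[of j] True lR0 by auto
      next
        case False
        then have "j = length R0 + 1" using j lR0 ne by (cases out) auto
        then have "take j (rev ((hd out + e) # tl out)) = rev ((hd out + e) # tl out)"
          unfolding rv' by simp
        then show ?thesis using A1 by (intro exI[of _ "length (p @ [e])"]) auto
      qed
      have "even (length (p @ [e]) + length ((hd out + e) # tl out) + 0)"
        using par True ne by (cases out) auto
      then have "Inv (p @ [e]) ((hd out + e) # tl out) 0"
        unfolding Inv_def using A1 A2 by blast
      then show ?thesis using True enz by (simp add: scan_step_def)
    next
      case False
      have par2: "even (length p + length out)" using par False by simp
      have A1: "altsum (rev (e # out)) = altsum (p @ [e])"
        using alt par2 by (simp add: altsum_append)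
      have A2: "\<exists>i\<le>length (p @ [e]). altsum (take j (rev (e # out))) = altsum (take i (p @ [e]))"
        if j: "j \<le> length (e # out)" for j
      proof (cases "j \<le> length out")
        case True
        have "take j (rev (e # out)) = take j (rev out)" using True by simp
        then show ?thesis using preS[of j] True by auto
      next
        case False
        then have "j = length out + 1" using j by auto
        then have "take j (rev (e # out)) = rev (e # out)" by simp
        then show ?thesis using A1 by (intro exI[of _ "length (p @ [e])"]) auto
      qed
      have "even (length (p @ [e]) + length (e # out) + 0)"
        using par2 by auto
      then have "Inv (p @ [e]) (e # out) 0"
        unfolding Inv_def using A1 A2 by blast
      then show ?thesis using False enz ne by (simp add: scan_step_def)
    qed
  qed
qed

lemma Inv_fold:
  "Inv p out z \<Longrightarrow> \<exists>out' z'. foldl scan_step (out, z, True) ys = (out', z', True) \<and> Inv (p @ ys) out' z'"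
proof (induction ys arbitrary: p out z)
  case Nil
  then show ?case by simp
next
  case (Cons e ys)
  obtain out1 z1 where 1: "scan_step (out, z, True) e = (out1, z1, True)" "Inv (p @ [e]) out1 z1"
    using Inv_step[OF Cons.prems] by blast
  show ?case using Cons.IH[OF 1(2)] 1(1) by simp
qed

lemma Inv_fin:
  assumes "Inv p out z" "j \<le> length (finB (out, z, True))"
  shows "\<exists>i\<le>length p. altsum (take j (finB (out, z, True))) = altsum (take i p)"
proof -
  have ne: "out \<noteq> []"
    and pre: "\<forall>j\<le>length out. \<exists>i\<le>length p. altsum (take j (rev out)) = altsum (take i p)"
    using assms unfolding Inv_def by auto
  show ?thesis
  proof (cases "odd z")
    case True
    have rv: "rev out = rev (tl out) @ [hd out]" using ne
      by (cases out) auto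
    have "j \<le> length (rev (tl out))" using assms(2) True unfolding finB_def by simp
    then have "take j (rev (tl out)) = take j (rev out)" unfolding rv by simp
    moreover have "j \<le> length out" using \<open>j \<le> length (rev (tl out))\<close> by simp
    ultimately show ?thesis using pre True unfolding finB_def by auto
  next
    case False
    then show ?thesis using pre assms(2) unfolding finB_def by auto
  qed
qed

definition Qe :: "real list \<Rightarrow> bool" where
  "Qe B \<longleftrightarrow> (\<forall>m. even m \<longrightarrow> m \<le> length B \<longrightarrow> altsum (take m B) \<ge> 0)"

definition Qa :: "real list \<Rightarrow> bool" where
  "Qa y \<longleftrightarrow> (\<forall>m\<le>length y. altsum (take m y) \<ge> 0)"

lemma y_nonneg: "B \<noteq> [] \<Longrightarrow> \<forall>v\<in>set (alg_y B). v \<ge> 0"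
  unfolding alg_y_def alg_mu_def by auto

lemma zero_in_y: "B \<noteq> [] \<Longrightarrow> 0 \<in> set (alg_y B)"
  unfolding alg_y_def alg_mu_def
  by (metis (no_types, lifting) Min_in diff_self empty_iff finite_set image_eqI list.set_map set_empty2)

lemma altsum_shift: "altsum (map (\<lambda>a. a - c) l) = altsum l - (if even (length l) then 0 else c)"
  by (induction l) auto

lemma Qa_y:
  assumes "B \<noteq> []" "Qe B"
  shows "Qa (alg_y B)"
  unfolding Qa_def
proof (intro allI impI)
  fix m assume m: "m \<le> length (alg_y B)"
  let ?y = "alg_y B"
  have ev: "altsum (take m' ?y) \<ge> 0" if "even m'" "m' \<le> length ?y" for m'
  proof -
    have "take m' ?y = map (\<lambda>a. a - alg_mu B) (take m' B)" unfolding alg_y_def by (simp add: take_map)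
    then have "altsum (take m' ?y) = altsum (take m' B)"
      using that by (simp add: altsum_shift alg_y_def)
    then show ?thesis using assms(2) that unfolding Qe_def alg_y_def by simp
  qed
  show "altsum (take m ?y) \<ge> 0"
  proof (cases "even m")
    case True
    then show ?thesis using ev m by simp
  next
    case False
    then obtain m' where m': "m = Suc m'" "even m'" by (cases m) auto
    have "take m ?y = take m' ?y @ [?y ! m']" using m m' by (simp add: take_Suc_conv_app_nth)
    then have "altsum (take m ?y) = altsum (take m' ?y) + ?y ! m'"
      using m m' by (simp add: altsum_append)
    moreover have "?y ! m' \<ge> 0" using y_nonneg[OF assms(1)] m m' by simp
    ultimately show ?thesis using ev[of m'] m m' by simp
  qed
qed

lemma decomp: "\<exists>n r. ys = replicate n (0::real) @ r \<and> (r = [] \<or> hd r \<noteq> 0)"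
proof -
  let ?t = "takeWhile (\<lambda>v. v = 0) ys" and ?d = "dropWhile (\<lambda>v. v = 0) ys"
  have "replicate (length ?t) 0 = ?t"
    by (rule replicate_length_same) (auto dest: set_takeWhileD)
  then have "ys = replicate (length ?t) 0 @ ?d" by simp
  moreover have "?d = [] \<or> hd ?d \<noteq> 0" using hd_dropWhile by blast
  ultimately show ?thesis by blast
qed

lemma lead_even:
  assumes "Qa y" "\<forall>v\<in>set y. v \<ge> 0" "y = replicate n 0 @ e # r" "e \<noteq> 0"
  shows "even n"
proof (rule ccontr)
  assume odd: "odd n"
  have "take (n + 1) y = replicate n 0 @ [e]" using assms(3) by simp
  then have "altsum (take (n + 1) y) = - e" using odd by (simp add: altsum_append altsum_rep0)
  moreover have "e > 0" using assms(2-4) by force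
  moreover have "n + 1 \<le> length y" using assms(3) by simp
  ultimately show False using assms(1) unfolding Qa_def by force
qed

lemma SR_single: "e \<ge> 0 \<Longrightarrow> d \<ge> 0 \<Longrightarrow> SR ([e + d], 0, True) ([e], 0, True)"
  unfolding SR_def by (auto simp: addl_def)

lemma scan_init_e: "e \<noteq> 0 \<Longrightarrow> scan_step ([], 0, False) e = ([e], 0, True)"
  by (simp add: scan_step_def)

lemma stepB:
  assumes "B \<noteq> []" "even (length B)" "Qe B"
  shows "length (alg_next False B) + 2 * SS (zero_runs (alg_y B)) = length B \<and> Qe (alg_next False B)"
proof -
  define y where "y = alg_y B"
  have ly: "length y = length B" unfolding y_def alg_y_def by simp
  have ypos: "\<forall>v\<in>set y. v \<ge> 0" unfolding y_def using y_nonneg[OF assms(1)] .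
  have Qy: "Qa y" unfolding y_def using Qa_y[OF assms(1,3)] .
  obtain n r where yd: "y = replicate n 0 @ r" and r: "r = [] \<or> hd r \<noteq> 0"
    using decomp[of y] by blast
  show ?thesis
  proof (cases r)
    case Nil
    have n: "n = length B" "n > 0" using yd Nil ly assms(1) by auto
    have "alg_next False B = []"
      unfolding alg_next_False y_def[symmetric] yd Nil using scan_F0[of n] by (simp add: finB_def)
    moreover have "zero_runs y = [n]" unfolding zero_runs_def yd Nil
      using zr_rep0[of 0 n "[]"] n by simp
    moreover have "2 * ((n + 1) div 2) = n" using n assms(2) by presburger
    ultimately show ?thesis using n unfolding y_def SS_def Qe_def by simp
  next
    case (Cons e r')
    have e: "e \<noteq> 0" using r Cons by simp
    have nev: "even n" using lead_even[OF Qy ypos _ e] yd Cons by simp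
    have fo: "foldl scan_step ([], 0, False) y = foldl scan_step ([e], 0, True) r'"
      unfolding yd Cons using scan_F0[of n] scan_init_e[OF e] by simp
    have L: "length (finB (foldl scan_step ([e], 0, True) r')) + 2 * SS (zr 0 r') = 1 + length r'"
      using len_scan[of "[e]" 0 r'] by simp
    have zy: "zero_runs y = zr n (e # r')" unfolding zero_runs_def yd Cons
      using zr_rep0[of 0 n "e # r'"] by simp
    have "SS (zero_runs y) = n div 2 + SS (zr 0 r')"
    proof (cases "n = 0")
      case True then show ?thesis using zy e by simp
    next
      case False
      then have "zero_runs y = n # zr 0 r'" using zy e by simp
      moreover have "(n + 1) div 2 = n div 2" using nev by presburger
      ultimately show ?thesis by (simp add: SS_def)
    qed
    moreover have "length y = n + 1 + length r'" using yd Cons by simp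
    ultimately have len: "length (alg_next False B) + 2 * SS (zero_runs (alg_y B)) = length B"
      using L fo nev ly unfolding alg_next_False y_def[symmetric] by simp
    have "\<forall>j\<le>length [e]. \<exists>i\<le>length [e]. altsum (take j (rev [e])) = altsum (take i [e])"
      by auto
    then have I0: "Inv [e] [e] 0" unfolding Inv_def by simp
    obtain out' z' where F: "foldl scan_step ([e], 0, True) r' = (out', z', True)"
      and I1: "Inv ([e] @ r') out' z'" using Inv_fold[OF I0] by blast
    have nb: "alg_next False B = finB (out', z', True)"
      unfolding alg_next_False y_def[symmetric] fo F ..
    have "Qe (finB (out', z', True))" unfolding Qe_def
    proof (intro allI impI)
      fix m assume m: "even m" "m \<le> length (finB (out', z', True))"
      obtain i where i: "i \<le> length (e # r')"
        "altsum (take m (finB (out', z', True))) = altsum (take i (e # r'))"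
        using Inv_fin[OF I1 m(2)] by auto
      have "take (n + i) y = replicate n 0 @ take i (e # r')" unfolding yd Cons by simp
      then have "altsum (take (n + i) y) = altsum (take i (e # r'))"
        using nev by (simp add: altsum_append altsum_rep0)
      moreover have "n + i \<le> length y" using i yd Cons by simp
      ultimately show "altsum (take m (finB (out', z', True))) \<ge> 0"
        using Qy i unfolding Qa_def by metis
    qed
    then show ?thesis using len nb by simp
  qed
qed

lemma Min_cons2:
  fixes x b1 :: real
  assumes "b1 \<le> x"
  shows "Min (set (x # b1 # t)) = Min (set (b1 # t))"
proof -
  have "Min (set (b1 # t)) \<le> b1" by simp
  then have "Min (set (b1 # t)) \<le> x" using assms by linarith
  moreover have s: "set (x # b1 # t) = insert x (set (b1 # t))" by simp
  moreover have "Min (insert x (set (b1 # t))) = min x (Min (set (b1 # t)))"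
    by (rule Min_insert) auto
  ultimately show ?thesis by (metis min.absorb2)
qed

lemma stepAB:
  assumes "B \<noteq> []" "even (length B)" "Qe B" "d \<ge> 0" "A = addhd d B"
  shows "alg_mu A = alg_mu B \<and> SS (zero_runs (alg_y A)) = SS (zero_runs (alg_y B)) \<and>
         (\<exists>d'\<ge>0. alg_next True A = addhd d' (alg_next False B))"
proof -
  obtain b0 b1 t where B: "B = b0 # b1 # t"
    using assms(1,2) by (cases B; cases "tl B") auto
  have l2: "2 \<le> length B" "even (2::nat)" using B by auto
  have "altsum (take 2 B) \<ge> 0" using assms(3) l2 unfolding Qe_def by blast
  moreover have "altsum (take 2 B) = b0 - b1" unfolding B by (simp add: numeral_2_eq_2)
  ultimately have b01: "b1 \<le> b0" by simp
  have A: "A = (b0 + d) # b1 # t" using assms(5) B by simp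
  have mu: "alg_mu A = alg_mu B"
    unfolding alg_mu_def A B using Min_cons2[of b1 b0 t] Min_cons2[of b1 "b0 + d" t] b01 assms(4)
    by simp
  define y where "y = alg_y B"
  have yA: "alg_y A = addhd d y"
    unfolding y_def alg_y_def mu unfolding A B by simp
  have ly: "length y = length B" unfolding y_def alg_y_def by simp
  have ypos: "\<forall>v\<in>set y. v \<ge> 0" unfolding y_def using y_nonneg[OF assms(1)] .
  have Qy: "Qa y" unfolding y_def using Qa_y[OF assms(1,3)] .
  obtain n r where yd: "y = replicate n 0 @ r" and r: "r = [] \<or> hd r \<noteq> 0"
    using decomp[of y] by blast
  have nxA: "alg_next True A = finA (foldl scan_step ([], 0, False) (addhd d y))"
    unfolding alg_next_True yA ..
  have nxB: "alg_next False B = finB (foldl scan_step ([], 0, False) y)"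
    unfolding alg_next_False y_def ..
  show ?thesis
  proof (cases "d = 0 \<or> n = 0")
    case True
    have "SS (zero_runs (addhd d y)) = SS (zero_runs y) \<and>
          SR (foldl scan_step ([], 0, False) (addhd d y)) (foldl scan_step ([], 0, False) y)"
    proof (cases "d = 0")
      case True
      then show ?thesis using SR_fold[OF ypos SR_init] by simp
    next
      case False
      then have n0: "n = 0" "d > 0" using \<open>d = 0 \<or> n = 0\<close> assms(4) by auto
      then obtain e r' where y: "y = e # r'" "e \<noteq> 0" using yd r ly assms(1)
        by (cases r) auto
      have e0: "e \<ge> 0" using ypos y by simp
      have ed: "e + d \<noteq> 0" using e0 n0 by simp
      have "zero_runs (addhd d y) = zero_runs y"
        unfolding zero_runs_def y using ed y(2) by simp
      moreover have "SR (foldl scan_step ([], 0, False) (addhd d y)) (foldl scan_step ([], 0, False) y)"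
        unfolding y using scan_init_e[OF ed] scan_init_e[OF y(2)]
          SR_fold[OF _ SR_single[OF e0 assms(4)], of r'] ypos y by simp
      ultimately show ?thesis by simp
    qed
    then show ?thesis using mu SR_fin nxA nxB yA unfolding y_def by metis
  next
    case False
    then have dpos: "d > 0" and npos: "n > 0" using assms(4) by auto
    then obtain n' where n': "n = Suc n'" by (cases n) auto
    have yAd: "addhd d y = d # replicate n' 0 @ r" unfolding yd n' by simp
    show ?thesis
    proof (cases r)
      case Nil
      have nB: "n = length B" using yd Nil ly by simp
      then have n'odd: "odd n'" using assms(2) n' by (metis even_Suc)
      then have n'pos: "n' > 0" by (cases n') auto
      have "zero_runs (addhd d y) = [n']" unfolding zero_runs_def yAd Nil
        using zr_rep0[of 0 n' "[]"] dpos n'pos by simp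
      moreover have "zero_runs y = [n]" unfolding zero_runs_def yd Nil
        using zr_rep0[of 0 n "[]"] npos by simp
      moreover have "(n' + 1) div 2 = (n + 1) div 2" using n' n'odd by presburger
      ultimately have ss: "SS (zero_runs (addhd d y)) = SS (zero_runs y)" by (simp add: SS_def)
      have "foldl scan_step ([], 0, False) (addhd d y) = ([d], n', True)"
        unfolding yAd Nil using scan_init_e[of d] dpos scan_T0[of "[d]" 0 n'] by simp
      then have "alg_next True A = []" unfolding nxA using n'odd by (simp add: finA_def)
      moreover have "alg_next False B = []" unfolding nxB yd Nil using scan_F0[of n]
        by (simp add: finB_def)
      ultimately show ?thesis using mu ss yA unfolding y_def by (metis addhd_Nil order_refl)
    next
      case (Cons e r')
      have e: "e \<noteq> 0" using r Cons by simp
      have e0: "e \<ge> 0" using ypos yd Cons by simp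
      have nev: "even n" using lead_even[OF Qy ypos _ e] yd Cons by simp
      then have n'odd: "odd n'" using n' by simp
      have "zero_runs (addhd d y) = n' # zr 0 r'" unfolding zero_runs_def yAd Cons
        using zr_rep0[of 0 n' "e # r'"] dpos n'odd e by (cases n') auto
      moreover have "zero_runs y = n # zr 0 r'" unfolding zero_runs_def yd Cons
        using zr_rep0[of 0 n "e # r'"] npos e by simp
      moreover have "(n' + 1) div 2 = (n + 1) div 2" using n' n'odd by presburger
      ultimately have ss: "SS (zero_runs (addhd d y)) = SS (zero_runs y)" by (simp add: SS_def)
      have fA: "foldl scan_step ([], 0, False) (addhd d y) = foldl scan_step ([e + d], 0, True) r'"
        unfolding yAd Cons using scan_init_e[of d] dpos scan_T0[of "[d]" 0 n'] n'odd e
        by (simp add: scan_step_def add.commute)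
      have fB: "foldl scan_step ([], 0, False) y = foldl scan_step ([e], 0, True) r'"
        unfolding yd Cons using scan_F0[of n] scan_init_e[OF e] by simp
      have "SR (foldl scan_step ([e + d], 0, True) r') (foldl scan_step ([e], 0, True) r')"
        using SR_fold[OF _ SR_single[OF e0 assms(4)], of r'] ypos yd Cons by simp
      then show ?thesis using mu ss yA SR_fin nxA nxB fA fB unfolding y_def by metis
    qed
  qed
qed

lemma altsum_pairs:
  "2 * k \<le> length x \<Longrightarrow> altsum (take (2 * k) x) = (\<Sum>i<k. x ! (2 * i) - x ! (2 * i + 1))"
proof (induction k)
  case 0
  then show ?case by simp
next
  case (Suc k)
  have l1: "2 * k < length x" "Suc (2 * k) < length x" using Suc.prems by auto
  have t1: "take (Suc (2 * k)) x = take (2 * k) x @ [x ! (2 * k)]"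
    by (rule take_Suc_conv_app_nth[OF l1(1)])
  have t2: "take (Suc (Suc (2 * k))) x = take (Suc (2 * k)) x @ [x ! (Suc (2 * k))]"
    by (rule take_Suc_conv_app_nth[OF l1(2)])
  have t: "take (2 * Suc k) x = take (2 * k) x @ [x ! (2 * k), x ! (2 * k + 1)]"
    using t1 t2 by simp
  have "altsum (take (2 * Suc k) x) = altsum (take (2 * k) x) + (x ! (2 * k) - x ! (2 * k + 1))"
    unfolding t using Suc.prems by (simp add: altsum_append)
  then show ?case using Suc by simp
qed

lemma Qe_init: "highest_weight x \<Longrightarrow> Qe x"
  unfolding Qe_def
proof (intro allI impI)
  fix m assume hw: "highest_weight x" and m: "even m" "m \<le> length x"
  obtain k where k: "m = 2 * k" using m(1) by blast
  show "altsum (take m x) \<ge> 0"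
  proof (cases "k = 0")
    case True then show ?thesis using k by simp
  next
    case False
    then have "k \<in> {1..length x div 2}" using k m by auto
    then show ?thesis using hw altsum_pairs[of k x] k m unfolding highest_weight_def by simp
  qed
qed

lemma next_Nil: "alg_next b [] = []"
  by (simp add: alg_next_def alg_y_def)

lemma state_Suc: "alg_state b x (Suc k) = alg_step b (alg_state b x k)"
  by (simp add: alg_state_def)

lemma J:
  assumes "length x = 2 * N"  "Qe x"
  shows "fst (alg_state True x k) = fst (alg_state False x k) \<and>
    length (snd (alg_state False x k)) = 2 * fst (alg_state False x k) \<and>
    Qe (snd (alg_state False x k)) \<and>
    (\<exists>d\<ge>0. snd (alg_state True x k) = addhd d (snd (alg_state False x k)))"
proof (induction k)
  case 0
  then show ?case using assms by (auto simp: alg_state_def intro!: exI[of _ 0])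
next
  case (Suc k)
  obtain NA A where sA: "alg_state True x k = (NA, A)" by (cases "alg_state True x k")
  obtain NB B where sB: "alg_state False x k = (NB, B)" by (cases "alg_state False x k")
  obtain d where d: "d \<ge> 0" "A = addhd d B" and N: "NA = NB" "length B = 2 * NB" and Q: "Qe B"
    using Suc sA sB by auto
  show ?case
  proof (cases "B = []")
    case True
    then have "NB = 0" "A = []" using N d by auto
    then show ?thesis using True N unfolding state_Suc sA sB
      by (auto simp: alg_step_def alg_newN_def next_Nil Qe_def intro!: exI[of _ 0])
  next
    case False
    have ev: "even (length B)" using N by simp
    have b: "length (alg_next False B) + 2 * SS (zero_runs (alg_y B)) = length B"
      "Qe (alg_next False B)" using stepB[OF False ev Q] by auto
    have ab: "SS (zero_runs (alg_y A)) = SS (zero_runs (alg_y B))"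
      "\<exists>d'\<ge>0. alg_next True A = addhd d' (alg_next False B)"
      using stepAB[OF False ev Q d] by auto
    have "length (alg_next False B) = 2 * (NB - SS (zero_runs (alg_y B)))"
      using b(1) N by simp
    then show ?thesis using b ab N unfolding state_Suc sA sB
      by (simp add: alg_step_def newN_SS)
  qed
qed

lemma SS_pos: "0 \<in> set ys \<or> c > 0 \<Longrightarrow> SS (zr c ys) \<ge> 1"
proof (induction ys arbitrary: c)
  case Nil
  then show ?case by (simp add: SS_def)
next
  case (Cons a ys)
  then show ?case by (auto simp: SS_def)
qed

lemma mu_nu_eq:
  assumes "length x = 2 * N"  "Qe x"
  shows "alg_mu (snd (alg_state True x k)) = alg_mu (snd (alg_state False x k)) \<and>
         SS (zero_runs (alg_y (snd (alg_state True x k)))) = SS (zero_runs (alg_y (snd (alg_state False x k))))"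
proof -
  obtain NA A where sA: "alg_state True x k = (NA, A)" by (cases "alg_state True x k")
  obtain NB B where sB: "alg_state False x k = (NB, B)" by (cases "alg_state False x k")
  obtain d where d: "d \<ge> 0" "A = addhd d B" and N: "NA = NB" "length B = 2 * NB" and Q: "Qe B"
    using J[OF assms, of k] sA sB by auto
  show ?thesis
  proof (cases "B = []")
    case True
    then show ?thesis using d sA sB by simp
  next
    case False
    then show ?thesis using stepAB[OF False _ Q d] N sA sB by simp
  qed
qed

theorem mainTheorem8:
  fixes N :: nat and x :: "real list"
  assumes "N \<ge> 1" and "length x = 2 * N" and "\<forall>a\<in>set x. a > 0"
    and "highest_weight x"
  shows "\<exists>u. alg_stops_at True x u \<and> alg_stops_at False x u \<and>
           (\<forall>i\<in>{1..u}. alg_mu_seq True x i = alg_mu_seq False x i \<and>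
                        alg_nu_seq True x i = alg_nu_seq False x i)"
proof -
  have Q: "Qe x" using Qe_init[OF assms(4)] .
  define NB where "NB k = fst (alg_state False x k)" for k
  have NA: "fst (alg_state True x k) = NB k" for k using J[OF assms(2) Q, of k] NB_def by simp
  have dec: "NB (Suc k) \<le> NB k - 1" for k
  proof -
    obtain Nk B where sB: "alg_state False x k = (Nk, B)" by (cases "alg_state False x k")
    have Nk: "NB k = Nk" unfolding NB_def sB by simp
    have lB: "length B = 2 * NB k" using J[OF assms(2) Q, of k] sB Nk by simp
    have "NB (Suc k) = fst (alg_step False (Nk, B))" unfolding NB_def state_Suc sB ..
    then have nx: "NB (Suc k) = NB k - SS (zero_runs (alg_y B))"
      using Nk by (simp add: alg_step_def newN_SS)
    show ?thesis
    proof (cases "NB k = 0")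
      case True then show ?thesis using nx by simp
    next
      case False
      then have "B \<noteq> []" using lB by auto
      then have "SS (zero_runs (alg_y B)) \<ge> 1"
        unfolding zero_runs_def using SS_pos zero_in_y by blast
      then show ?thesis using nx by simp
    qed
  qed
  have N0: "NB 0 = N" using assms(2) unfolding NB_def alg_state_def by simp
  have bound: "NB k \<le> N - k" for k
  proof (induction k)
    case 0 then show ?case using N0 by simp
  next
    case (Suc k) then show ?case using dec[of k] by simp
  qed
  have ex: "NB N = 0" using bound[of N] by simp
  define u where "u = (LEAST k. NB k = 0)"
  have u0: "NB u = 0" unfolding u_def using ex by (rule LeastI)
  have u1: "u \<ge> 1" using u0 N0 assms(1) by (cases u) auto
  have ui: "NB i \<noteq> 0" if "i < u" for i using not_less_Least[of i "\<lambda>k. NB k = 0"] that u_def by blast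
  have stops: "alg_stops_at b x u" for b
    unfolding alg_stops_at_def using u0 u1 ui NA NB_def by (cases b) auto
  have eqs: "alg_mu_seq True x i = alg_mu_seq False x i \<and> alg_nu_seq True x i = alg_nu_seq False x i" for i
  proof -
    have m: "alg_mu (snd (alg_state True x (i - 1))) = alg_mu (snd (alg_state False x (i - 1)))"
      and s: "SS (zero_runs (alg_y (snd (alg_state True x (i - 1))))) = SS (zero_runs (alg_y (snd (alg_state False x (i - 1)))))"
      using mu_nu_eq[OF assms(2) Q] by auto
    have f: "fst (alg_state True x (i - 1)) = fst (alg_state False x (i - 1))" using NA NB_def by simp
    have nu: "alg_nu_seq b x i = alg_nu (fst (alg_state b x (i - 1))) (snd (alg_state b x (i - 1)))" for b
      unfolding alg_nu_seq_def by (simp split: prod.split)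
    show ?thesis unfolding alg_mu_seq_def nu alg_nu_def newN_SS using m s f by simp
  qed
  show ?thesis using stops eqs by blast
qed

end
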